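(* Fix a prime $q\ge3$. Let $T_1,T_2,T_3\subseteq\mathbb{F}_q$ be arbitrary sets of size $\ell>0$, and let $X_1,X_2$ be independent with $X_1$ uniform on $T_1$ and $X_2$ uniform on $T_2$. Then $$\Pr[X_1+X_2\in T_3]\le\begin{cases}\frac34+\frac{1}{4\ell^2}+\frac{\max(0,3\ell-2q-1)\cdot(3\ell-2q+1)}{4\ell^2}, & \ell\text{ odd},\\ \frac34+\frac{\max(0,3\ell-2q)^2}{4\ell^2}, & \ell\text{ even},\end{cases}$$ and this bound is tight for all $\ell$ (i.e., for every $\ell$ there exist such $T_1,T_2,T_3$ attaining it). In particular: (1) if $\ell\le 2q/3$, then $\Pr[X_1+X_2\in T_3]\le\frac34+\frac{1}{4\ell^2}$ when $\ell$ is odd and $\le\frac34$ when $\ell$ is even; (2) if $2q/3<\ell\le q-1$, then $\Pr[X_1+X_2\in T_3]\le\frac{q^2-3\ell(q-\ell)}{\ell^2}$. *)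

theory Defs
  imports "HOL-Probability.Probability" "HOL-Computational_Algebra.Primes"
begin

text \<open>The field F_q is represented by the residues {0..<q} (q prime), with addition
  (a + b) mod q.\<close>

definition sum_in_prob :: "nat \<Rightarrow> nat set \<Rightarrow> nat set \<Rightarrow> nat set \<Rightarrow> real" where
  "sum_in_prob q T1 T2 T3 =
     measure_pmf.prob (pair_pmf (pmf_of_set T1) (pmf_of_set T2))
       {(x1, x2). (x1 + x2) mod q \<in> T3}"

text \<open>The bound of the lemma (q, l as integers to avoid truncated subtraction).\<close>

definition sumset_bound :: "nat \<Rightarrow> nat \<Rightarrow> real" where
  "sumset_bound q l =
     (let L = int l; Q = int q in
      if odd l then
        3/4 + 1 / (4 * real_of_int (L^2))
          + real_of_int (max 0 (3*L - 2*Q - 1) * (3*L - 2*Q + 1)) / (4 * real_of_int (L^2))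
      else
        3/4 + real_of_int ((max 0 (3*L - 2*Q))^2) / (4 * real_of_int (L^2)))"

end

theory Submission
  imports Defs "HOL-Number_Theory.Number_Theory"
begin

definition rr :: "nat \<Rightarrow> nat set \<Rightarrow> nat set \<Rightarrow> nat \<Rightarrow> nat" where
  "rr q A B c = card {p \<in> A \<times> B. (fst p + snd p) mod q = c}"

definition NN :: "nat \<Rightarrow> nat \<Rightarrow> nat set \<Rightarrow> nat set \<Rightarrow> nat" where
  "NN q t A B = (\<Sum>c<q. min (rr q A B c) t)"

lemma shift_inj:
  fixes x y e q :: nat
  assumes "x < q" "y < q" "(x + e) mod q = (y + e) mod q"
  shows "x = y"
proof -
  have "[x + e = y + e] (mod q)" using assms(3) by (simp add: cong_def)
  then have "[x = y] (mod q)" by (simp add: cong_add_rcancel_nat)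
  then show ?thesis using assms(1,2) by (simp add: cong_def)
qed

lemma inj_shift: "inj_on (\<lambda>b. (b + e) mod q) {..<(q::nat)}"
  by (auto intro: inj_onI shift_inj)

lemma card_shift: "B \<subseteq> {..<(q::nat)} \<Longrightarrow> card ((\<lambda>b. (b + e) mod q) ` B) = card B"
  by (rule card_image, rule inj_on_subset[OF inj_shift])

lemma sum_rr:
  assumes "A \<subseteq> {..<q}" "B \<subseteq> {..<q}" "q > 0"
  shows "(\<Sum>c<q. rr q A B c) = card A * card B"
proof -
  have fin: "finite A" "finite B" using assms finite_subset by blast+
  have "A \<times> B = (\<Union>c\<in>{..<q}. {p \<in> A \<times> B. (fst p + snd p) mod q = c})"
    using assms(3) by auto
  then have "card (A \<times> B) = card (\<Union>c\<in>{..<q}. {p \<in> A \<times> B. (fst p + snd p) mod q = c})" by simp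
  also have "\<dots> = (\<Sum>c<q. rr q A B c)" unfolding rr_def
    by (rule card_UN_disjoint) (use fin in auto)
  finally show ?thesis by (simp add: card_cartesian_product)
qed

lemma rr_le_B:
  assumes "A \<subseteq> {..<q}" "finite B"
  shows "rr q A B c \<le> card B"
proof -
  have "inj_on snd {p \<in> A \<times> B. (fst p + snd p) mod q = c}"
  proof (rule inj_onI)
    fix p p' assume h: "p \<in> {p \<in> A \<times> B. (fst p + snd p) mod q = c}"
       "p' \<in> {p \<in> A \<times> B. (fst p + snd p) mod q = c}" "snd p = snd p'"
    have "fst p < q" "fst p' < q" using h(1,2) assms(1) by auto
    moreover have "(fst p + snd p) mod q = (fst p' + snd p) mod q" using h by auto
    ultimately have "fst p = fst p'" using shift_inj by blast
    then show "p = p'" using h(3) by (simp add: prod_eq_iff)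
  qed
  then have "rr q A B c = card (snd ` {p \<in> A \<times> B. (fst p + snd p) mod q = c})"
    unfolding rr_def by (simp add: card_image)
  also have "\<dots> \<le> card B" by (rule card_mono) (use assms in auto)
  finally show ?thesis .
qed

lemma rr_full:
  assumes "B \<subseteq> {..<q}" "c < q"
  shows "rr q {..<q} B c = card B"
proof -
  have key: "a = (c + q - b) mod q" if h: "a < q" "b < q" "(a + b) mod q = c" for a b
  proof -
    have "[a + b = c] (mod q)" using h assms by (simp add: cong_def)
    then have "[a + b + (q - b) = c + (q - b)] (mod q)" by (simp add: cong_add)
    moreover have "a + b + (q - b) = a + q" using h by simp
    ultimately have "[a + q = c + q - b] (mod q)" using h by simp
    then show "a = (c + q - b) mod q" using h(1) by (simp add: cong_def)
  qed
  have key2: "((c + q - b) mod q + b) mod q = c" if "b < q" for b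
  proof -
    have "((c + q - b) mod q + b) mod q = (c + q - b + b) mod q" by (simp add: mod_add_left_eq)
    also have "\<dots> = c" using that assms(2) by simp
    finally show ?thesis .
  qed
  have "{p \<in> {..<q} \<times> B. (fst p + snd p) mod q = c} = (\<lambda>b. ((c + q - b) mod q, b)) ` B"
  proof (intro equalityI subsetI)
    fix p assume "p \<in> {p \<in> {..<q} \<times> B. (fst p + snd p) mod q = c}"
    then show "p \<in> (\<lambda>b. ((c + q - b) mod q, b)) ` B" using key assms(1)
      by (cases p) force
  next
    fix p assume "p \<in> (\<lambda>b. ((c + q - b) mod q, b)) ` B"
    then show "p \<in> {p \<in> {..<q} \<times> B. (fst p + snd p) mod q = c}" using key2 assms
      by auto
  qed
  moreover have "inj_on (\<lambda>b. ((c + q - b) mod q, b)) B" by (auto intro: inj_onI)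
  ultimately show ?thesis unfolding rr_def by (simp add: card_image)
qed

lemma diff_mod_nz:
  fixes b0 b1 q :: nat
  assumes "b0 < q" "b1 < q" "b0 \<noteq> b1"
  shows "(b1 + q - b0) mod q \<noteq> 0" "(b1 + q - b0) mod q < q"
proof -
  have q0: "0 < q" using assms(1) by linarith
  then show "(b1 + q - b0) mod q < q" by (rule mod_less_divisor)
  show "(b1 + q - b0) mod q \<noteq> 0"
  proof (cases "b0 < b1")
    case True
    then have e: "b1 + q - b0 = (b1 - b0) + q" by linarith
    have "b1 - b0 < q" using assms(2) by linarith
    then have "((b1 - b0) + q) mod q = b1 - b0" by (metis mod_add_self2 mod_less)
    then have "(b1 + q - b0) mod q = b1 - b0" using e by metis
    then show ?thesis using True by linarith
  next
    case False
    then have "b1 + q - b0 < q" "b1 + q - b0 > 0" using assms by linarith+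
    then show ?thesis by (metis mod_less not_gr_zero)
  qed
qed

lemma exists_e:
  fixes q :: nat and A B :: "nat set"
  assumes "prime q" "A \<subseteq> {..<q}" "A \<noteq> {}" "A \<noteq> {..<q}" "B \<subseteq> {..<q}" "2 \<le> card B"
  shows "\<exists>e. {b\<in>B. (b+e) mod q \<in> A} \<noteq> {} \<and> {b\<in>B. (b+e) mod q \<in> A} \<noteq> B"
proof (rule ccontr)
  assume H: "\<not> ?thesis"
  have q0: "q > 0" using prime_gt_0_nat[OF assms(1)] by simp
  have "B \<noteq> {}" using assms(6) by auto
  then obtain b0 where b0: "b0 \<in> B" by blast
  have "card (B - {b0}) \<ge> 1" using assms(6) b0 by (simp add: card_Diff_singleton)
  then have "B - {b0} \<noteq> {}" by (metis card.empty not_one_le_zero)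
  then obtain b1 where b1: "b1 \<in> B" "b1 \<noteq> b0" by blast
  have bq: "b0 < q" "b1 < q" using b0 b1 assms(5) by auto
  define d where "d = (b1 + q - b0) mod q"
  have d: "d \<noteq> 0" "d < q" unfolding d_def using diff_mod_nz[OF bq b1(2)[symmetric]] by auto
  have closed: "(x + d) mod q \<in> A" if x: "x \<in> A" for x
  proof -
    have xq: "x < q" using x assms(2) by auto
    define e where "e = x + q - b0"
    have "b0 + e = x + q" unfolding e_def using bq xq by linarith
    then have "(b0 + e) mod q = x" using xq by simp
    then have "b0 \<in> {b\<in>B. (b+e) mod q \<in> A}" using b0 x by simp
    then have "{b\<in>B. (b+e) mod q \<in> A} = B" using H by blast
    then have "(b1 + e) mod q \<in> A" using b1 by blast
    moreover have "(b1 + e) mod q = (x + d) mod q" unfolding e_def d_def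
    proof -
      have "(x + (b1 + q - b0) mod q) mod q = (x + (b1 + q - b0)) mod q" by (simp add: mod_add_right_eq)
      also have "x + (b1 + q - b0) = b1 + (x + q - b0)" using bq by linarith
      finally show "(b1 + (x + q - b0)) mod q = (x + (b1 + q - b0) mod q) mod q" by metis
    qed
    ultimately show ?thesis by simp
  qed
  have iter: "(x + k * d) mod q \<in> A" if "x \<in> A" for k x
  proof (induction k)
    case 0
    then show ?case using that assms(2) by auto
  next
    case (Suc k)
    have "x + Suc k * d = (x + k * d) + d" by simp
    then have "(x + Suc k * d) mod q = ((x + k * d) mod q + d) mod q" by (metis mod_add_left_eq)
    then show ?case using closed[OF Suc] by simp
  qed
  obtain a where a: "a \<in> A" using assms(3) by blast
  have aq: "a < q" using a assms(2) by auto
  have cop: "coprime d q"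
  proof -
    have "\<not> q dvd d" using d by auto
    then have "coprime q d" using assms(1) by (simp add: prime_imp_coprime)
    then show ?thesis by (simp add: coprime_commute)
  qed
  have "y \<in> A" if y: "y < q" for y
  proof -
    obtain k where k: "[d * k = y + q - a] (mod q)" using cong_solve[OF cop] by blast
    have "(k * d) mod q = (y + q - a) mod q" using k unfolding cong_def by (simp add: mult.commute)
    then have "(a + k * d) mod q = (a + (y + q - a)) mod q"
      by (metis mod_add_right_eq)
    also have "a + (y + q - a) = y + q" using aq by linarith
    also have "(y + q) mod q = y" using y by simp
    finally have "(a + k * d) mod q = y" .
    then show ?thesis using iter[OF a, of k] by simp
  qed
  then have "A = {..<q}" using assms(2) by auto
  then show False using assms(4) by simp
qed

lemma fib_card_Un:
  fixes X Y :: "(nat \<times> nat) set"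
  assumes "finite X" "finite Y" "X \<inter> Y = {}"
  shows "card {p \<in> X \<union> Y. P p} = card {p \<in> X. P p} + card {p \<in> Y. P p}"
proof -
  have "{p \<in> X \<union> Y. P p} = {p \<in> X. P p} \<union> {p \<in> Y. P p}" by auto
  then show ?thesis using assms by (simp add: card_Un_disjoint disjoint_iff)
qed

lemma decomp:
  fixes q e c :: nat and A B :: "nat set"
  assumes A: "A \<subseteq> {..<q}" and B: "B \<subseteq> {..<q}"
  defines "sh \<equiv> \<lambda>b. (b + e) mod q"
  defines "B1 \<equiv> {b\<in>B. sh b \<in> A}"
  defines "B2 \<equiv> B - B1"
  defines "A0 \<equiv> A - sh ` B1"
  defines "A1 \<equiv> A \<union> sh ` B2"
  shows "rr q A1 B1 c + rr q A0 B2 c \<le> rr q A B c"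
proof -
  define P where "P = (\<lambda>p::nat\<times>nat. (fst p + snd p) mod q = c)"
  have finA: "finite A" and finB: "finite B" using A B finite_subset by blast+
  have fin: "finite B1" "finite B2" "finite A0" "finite (sh ` B1)" "finite (sh ` B2)"
    using finA finB unfolding B1_def B2_def A0_def by auto
  have disjAD: "A \<inter> sh ` B2 = {}" unfolding B2_def B1_def by auto
  have shB1: "sh ` B1 \<subseteq> A" unfolding B1_def by auto
  have e1: "rr q A1 B1 c = card {p \<in> A \<times> B1. P p} + card {p \<in> sh ` B2 \<times> B1. P p}"
  proof -
    have "A1 \<times> B1 = A \<times> B1 \<union> sh ` B2 \<times> B1" unfolding A1_def by auto
    moreover have "(A \<times> B1) \<inter> (sh ` B2 \<times> B1) = {}" using disjAD by auto
    ultimately show ?thesis unfolding rr_def P_def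
      using fib_card_Un[of "A \<times> B1" "sh ` B2 \<times> B1"] finA fin by simp
  qed
  define G where "G = {(x, y). x \<in> B2 \<and> y \<in> B1 \<and> (x + y + e) mod q = c}"
  have shsum: "(sh x + y) mod q = (x + y + e) mod q" for x y
    unfolding sh_def by (metis add.commute add.left_commute mod_add_right_eq)
  have B12q: "B1 \<subseteq> {..<q}" "B2 \<subseteq> {..<q}" using B unfolding B1_def B2_def by auto
  have injsh: "inj_on sh {..<q}" unfolding sh_def by (rule inj_shift)
  have g1: "{p \<in> sh ` B2 \<times> B1. P p} = (\<lambda>(x, y). (sh x, y)) ` G"
    unfolding G_def P_def using shsum by auto
  have g2: "{p \<in> sh ` B1 \<times> B2. P p} = (\<lambda>(x, y). (sh y, x)) ` G"
    unfolding G_def P_def using shsum by (auto simp: add.commute add.left_commute) 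
  have i1: "inj_on (\<lambda>(x, y). (sh x, y)) G"
  proof (rule inj_onI)
    fix u v assume "u \<in> G" "v \<in> G" "(case u of (x, y) \<Rightarrow> (sh x, y)) = (case v of (x, y) \<Rightarrow> (sh x, y))"
    then show "u = v" using injsh B12q unfolding G_def inj_on_def by auto
  qed
  have i2: "inj_on (\<lambda>(x, y). (sh y, x)) G"
  proof (rule inj_onI)
    fix u v assume "u \<in> G" "v \<in> G" "(case u of (x, y) \<Rightarrow> (sh y, x)) = (case v of (x, y) \<Rightarrow> (sh y, x))"
    then show "u = v" using injsh B12q unfolding G_def inj_on_def by auto
  qed
  have eqc: "card {p \<in> sh ` B2 \<times> B1. P p} = card {p \<in> sh ` B1 \<times> B2. P p}"
    using g1 g2 i1 i2 by (simp add: card_image)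
  have "A \<times> B \<supseteq> (A \<times> B1 \<union> sh ` B1 \<times> B2) \<union> A0 \<times> B2"
    using shB1 unfolding A0_def B2_def B1_def by auto
  then have "card {p \<in> (A \<times> B1 \<union> sh ` B1 \<times> B2) \<union> A0 \<times> B2. P p} \<le> card {p \<in> A \<times> B. P p}"
    by (intro card_mono) (use finA finB in auto)
  moreover have "card {p \<in> (A \<times> B1 \<union> sh ` B1 \<times> B2) \<union> A0 \<times> B2. P p}
     = card {p \<in> A \<times> B1. P p} + card {p \<in> sh ` B1 \<times> B2. P p} + card {p \<in> A0 \<times> B2. P p}"
  proof -
    have d1: "(A \<times> B1) \<inter> (sh ` B1 \<times> B2) = {}" unfolding B2_def by auto
    have d2: "(A \<times> B1 \<union> sh ` B1 \<times> B2) \<inter> (A0 \<times> B2) = {}" unfolding B2_def A0_def by auto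
    show ?thesis
      using fib_card_Un[OF _ _ d2, of P] fib_card_Un[OF _ _ d1, of P] finA fin by simp
  qed
  ultimately show ?thesis using e1 eqc unfolding rr_def P_def by linarith
qed

lemma arith1:
  fixes a b s t q :: nat
  assumes "s < t" "t \<le> a" "t \<le> b" "a + b - s \<le> q"
  shows "t * min q (a + b - t) \<le> (a + b - s) * s + (t - s) * min q ((a - s) + (b - s) - (t - s))"
proof -
  obtain u where u: "t = s + u" using assms(1) less_imp_add_positive by blast
  obtain x where x: "a = t + x" using assms(2) le_Suc_ex by blast
  obtain y where y: "b = t + y" using assms(3) le_Suc_ex by blast
  have h1: "a + b - s = u + (s + u + x + y)" unfolding x y u by simp
  have h2: "(a - s) + (b - s) - (t - s) = u + x + y" unfolding x y u by simp
  have h3: "a + b - t = s + u + x + y" unfolding x y u by simp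
  have h4: "t - s = u" unfolding u by simp
  have mw: "min q (u + x + y) = u + x + y" using h1 assms(4) by simp
  have "t * min q (a + b - t) \<le> t * (s + u + x + y)" unfolding h3 by simp
  also have "\<dots> = (s + u) * (s + u + x + y)" unfolding u ..
  also have "\<dots> = (u + (s + u + x + y)) * s + u * (u + x + y)"
    by (simp add: algebra_simps)
  also have "\<dots> = (a + b - s) * s + (t - s) * min q ((a - s) + (b - s) - (t - s))"
    using h1 h2 h4 mw by simp
  finally show ?thesis .
qed

lemma min_split: "(x::nat) + y \<le> z \<Longrightarrow> x \<le> s \<Longrightarrow> s < t \<Longrightarrow> x + min y (t - s) \<le> min z t"
  by linarith

lemma pollard:
  fixes q :: nat
  assumes pq: "prime q"
  shows "B \<subseteq> {..<q} \<Longrightarrow> A \<subseteq> {..<q} \<Longrightarrow> 1 \<le> t \<Longrightarrow> t \<le> card A \<Longrightarrow> t \<le> card B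
     \<Longrightarrow> t * min q (card A + card B - t) \<le> NN q t A B"
proof (induction "card B" arbitrary: A B t rule: less_induct)
  case less
  have q0: "q > 0" using prime_gt_0_nat[OF pq] .
  have finA: "finite A" and finB: "finite B" using less.prems(1,2) finite_subset by blast+
  show ?case
  proof (cases "A = {..<q}")
    case True
    have "NN q t A B = (\<Sum>c<q. t)" unfolding NN_def True
      using rr_full[OF less.prems(1)] less.prems(5) by (intro sum.cong) auto
    then have "NN q t A B = q * t" by simp
    moreover have "t * min q (card A + card B - t) \<le> t * q" by simp
    ultimately show ?thesis by (simp add: mult.commute)
  next
    case Aneq: False
    show ?thesis
    proof (cases "card B = 1")
      case True
      then have t1: "t = 1" using less.prems(3,5) by linarith
      obtain b where Bb: "B = {b}" using True card_1_singletonE by blast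
      define sh where "sh = (\<lambda>a. (a + b) mod q)"
      have shA: "sh ` A \<subseteq> {..<q}" unfolding sh_def using q0 by auto
      have one: "min (rr q A B c) 1 = 1" if c: "c \<in> sh ` A" for c
      proof -
        obtain a where a: "a \<in> A" "c = sh a" using c by blast
        have "(a, b) \<in> {p \<in> A \<times> B. (fst p + snd p) mod q = c}" using a Bb unfolding sh_def by simp
        moreover have "finite {p \<in> A \<times> B. (fst p + snd p) mod q = c}" using finA finB by simp
        ultimately have "rr q A B c > 0" unfolding rr_def using card_gt_0_iff by blast
        then show ?thesis by simp
      qed
      have "card A = card (sh ` A)" unfolding sh_def using card_shift[OF less.prems(2)] by simp
      also have "\<dots> = (\<Sum>c\<in>sh ` A. min (rr q A B c) 1)" using one by simp
      also have "\<dots> \<le> (\<Sum>c<q. min (rr q A B c) 1)" by (rule sum_mono2) (use shA in auto)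
      finally have "card A \<le> NN q 1 A B" unfolding NN_def .
      then show ?thesis using t1 True by simp
    next
      case Bne1: False
      have B2: "2 \<le> card B" using Bne1 less.prems(3,5) by linarith
      have Ane: "A \<noteq> {}" using less.prems(3,4) by auto
      obtain e where e: "{b\<in>B. (b+e) mod q \<in> A} \<noteq> {}" "{b\<in>B. (b+e) mod q \<in> A} \<noteq> B"
        using exists_e[OF pq less.prems(2) Ane Aneq less.prems(1) B2] by blast
      define sh where "sh = (\<lambda>b. (b + e) mod q)"
      define B1 where "B1 = {b\<in>B. sh b \<in> A}"
      define B2 where "B2 = B - B1"
      define A0 where "A0 = A - sh ` B1"
      define A1 where "A1 = A \<union> sh ` B2"
      have dec: "rr q A1 B1 c + rr q A0 B2 c \<le> rr q A B c" for c
        unfolding A1_def A0_def B2_def B1_def sh_def by (rule decomp[OF less.prems(2,1)])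
      have B1ne: "B1 \<noteq> {}" and B1neq: "B1 \<noteq> B" using e unfolding B1_def sh_def by auto
      have B1sub: "B1 \<subseteq> B" unfolding B1_def by auto
      have finB1: "finite B1" using finB B1sub finite_subset by blast
      define s where "s = card B1"
      have s0: "0 < s" unfolding s_def using B1ne finB1 card_gt_0_iff by blast
      have sB: "s < card B" unfolding s_def using B1sub B1neq finB by (meson psubsetI psubset_card_mono)
      have cB2: "card B2 = card B - s" unfolding B2_def s_def using B1sub finB1 by (simp add: card_Diff_subset)
      have B1q: "B1 \<subseteq> {..<q}" and B2q: "B2 \<subseteq> {..<q}" using less.prems(1) B1sub unfolding B2_def by auto
      have shB1: "sh ` B1 \<subseteq> A" unfolding B1_def by auto
      have cshB1: "card (sh ` B1) = s" unfolding s_def sh_def using card_shift[OF B1q] by simp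
      have cA0: "card A0 = card A - s" unfolding A0_def using shB1 cshB1 finA
        by (metis card_Diff_subset finite_subset)
      have disj: "A \<inter> sh ` B2 = {}" unfolding B2_def B1_def by auto
      have cshB2: "card (sh ` B2) = card B2" unfolding sh_def using card_shift[OF B2q] by simp
      have cA1: "card A1 = card A + card B2" unfolding A1_def using disj cshB2 finA finB
        by (simp add: B2_def card_Un_disjoint)
      have A1q: "A1 \<subseteq> {..<q}" unfolding A1_def sh_def using less.prems(2) q0 by auto
      have A0q: "A0 \<subseteq> {..<q}" unfolding A0_def using less.prems(2) by auto
      have cA1q: "card A1 \<le> q" using card_mono[OF _ A1q] by simp
      have sum_eq: "card A1 + card B1 = card A + card B" using cA1 cB2 sB unfolding s_def by linarith
      show ?thesis
      proof (cases "t \<le> s")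
        case True
        have IH: "t * min q (card A1 + card B1 - t) \<le> NN q t A1 B1"
          using less.hyps[of B1 A1 t] sB B1q A1q less.prems(3,4) True cA1 unfolding s_def by simp
        have "NN q t A1 B1 \<le> NN q t A B" unfolding NN_def
          using dec by (intro sum_mono) (metis le_add1 le_trans min.mono order_refl)
        then show ?thesis using IH sum_eq by simp
      next
        case False
        have IH: "(t - s) * min q (card A0 + card B2 - (t - s)) \<le> NN q (t - s) A0 B2"
          using less.hyps[of B2 A0 "t - s"] sB B2q A0q less.prems(3,4,5) False cA0 cB2 s0 by simp
        have rle: "rr q A1 B1 c \<le> s" for c unfolding s_def using rr_le_B[OF A1q finB1] .
        have "(\<Sum>c<q. rr q A1 B1 c + min (rr q A0 B2 c) (t - s)) \<le> NN q t A B" unfolding NN_def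
          using dec rle False by (intro sum_mono min_split) auto
        moreover have "(\<Sum>c<q. rr q A1 B1 c + min (rr q A0 B2 c) (t - s)) = card A1 * s + NN q (t - s) A0 B2"
          unfolding NN_def sum.distrib sum_rr[OF A1q B1q q0] s_def by simp
        ultimately have "card A1 * s + (t - s) * min q (card A0 + card B2 - (t - s)) \<le> NN q t A B"
          using IH by linarith
        moreover have "t * min q (card A + card B - t) \<le> (card A + card B - s) * s + (t - s) * min q ((card A - s) + (card B - s) - (t - s))"
          using arith1[of s t "card A" "card B" q] False less.prems(4,5) cA1q cA1 cB2 sB by linarith
        moreover have "card A + card B - s = card A1" using cA1 cB2 sB by linarith
        ultimately show ?thesis using cA0 cB2 by simp
      qed
    qed
  qed
qed

lemma count_sum:
  assumes "A \<subseteq> {..<q}" "B \<subseteq> {..<q}" "C \<subseteq> {..<q}"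
  shows "card {p \<in> A \<times> B. (fst p + snd p) mod q \<in> C} = (\<Sum>c\<in>C. rr q A B c)"
proof -
  have fin: "finite A" "finite B" "finite C" using assms finite_subset by blast+
  have "{p \<in> A \<times> B. (fst p + snd p) mod q \<in> C} = (\<Union>c\<in>C. {p \<in> A \<times> B. (fst p + snd p) mod q = c})"
    by auto
  then have "card {p \<in> A \<times> B. (fst p + snd p) mod q \<in> C} = card (\<Union>c\<in>C. {p \<in> A \<times> B. (fst p + snd p) mod q = c})" by simp
  also have "\<dots> = (\<Sum>c\<in>C. rr q A B c)" unfolding rr_def
    by (rule card_UN_disjoint) (use fin in auto)
  finally show ?thesis .
qed

lemma count_bound:
  fixes q l t :: nat
  assumes pq: "prime q" and A: "A \<subseteq> {..<q}" and B: "B \<subseteq> {..<q}" and C: "C \<subseteq> {..<q}"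
    and cA: "card A = l" and cB: "card B = l" and cC: "card C = l" and t: "1 \<le> t" "t \<le> l"
  shows "card {p \<in> A \<times> B. (fst p + snd p) mod q \<in> C} + t * min q (2 * l - t) \<le> l * l + t * l"
proof -
  have q0: "q > 0" using prime_gt_0_nat[OF pq] .
  have finC: "finite C" using C finite_subset by blast
  define R where "R = {..<q} - C"
  have split: "{..<q} = C \<union> R" "C \<inter> R = {}" "finite R" unfolding R_def using C by auto
  have P: "t * min q (2 * l - t) \<le> NN q t A B"
    using pollard[OF pq B A t(1)] t cA cB by (simp add: mult_2)
  have "NN q t A B = (\<Sum>c\<in>C. min (rr q A B c) t) + (\<Sum>c\<in>R. min (rr q A B c) t)"
    unfolding NN_def split(1) using split finC by (simp add: sum.union_disjoint)
  also have "\<dots> \<le> (\<Sum>c\<in>C. t) + (\<Sum>c\<in>R. rr q A B c)"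
    by (intro add_mono sum_mono) auto
  finally have N: "NN q t A B \<le> t * l + (\<Sum>c\<in>R. rr q A B c)" using cC by (simp add: mult.commute)
  have "l * l = (\<Sum>c<q. rr q A B c)" using sum_rr[OF A B q0] cA cB by simp
  also have "\<dots> = (\<Sum>c\<in>C. rr q A B c) + (\<Sum>c\<in>R. rr q A B c)"
    unfolding split(1) using split finC by (simp add: sum.union_disjoint)
  finally have S: "l * l = card {p \<in> A \<times> B. (fst p + snd p) mod q \<in> C} + (\<Sum>c\<in>R. rr q A B c)"
    using count_sum[OF A B C] by simp
  show ?thesis using P N S by linarith
qed

lemma pair_pmf_of_set:
  assumes "finite A" "A \<noteq> {}" "finite B" "B \<noteq> {}"
  shows "pair_pmf (pmf_of_set A) (pmf_of_set B) = pmf_of_set (A \<times> B)"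
proof (rule pmf_eqI)
  fix x :: "'a \<times> 'b"
  obtain a b where x: "x = (a, b)" by (cases x)
  show "pmf (pair_pmf (pmf_of_set A) (pmf_of_set B)) x = pmf (pmf_of_set (A \<times> B)) x"
    unfolding x pmf_pair using assms by (simp add: card_cartesian_product indicator_def)
qed

lemma prob_eq:
  assumes "finite T1" "T1 \<noteq> {}" "finite T2" "T2 \<noteq> {}"
  shows "sum_in_prob q T1 T2 T3 = card {p \<in> T1 \<times> T2. (fst p + snd p) mod q \<in> T3} / (card T1 * card T2)"
proof -
  have "(T1 \<times> T2) \<inter> {(x1, x2). (x1 + x2) mod q \<in> T3} = {p \<in> T1 \<times> T2. (fst p + snd p) mod q \<in> T3}"
    by auto
  then show ?thesis unfolding sum_in_prob_def pair_pmf_of_set[OF assms]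
    using assms by (simp add: measure_pmf_of_set card_cartesian_product)
qed

lemma sb_small_odd:
  assumes "odd l" "3 * l \<le> 2 * q + 1"
  shows "sumset_bound q l = 3/4 + 1 / (4 * (real l)^2)"
proof -
  have "max 0 (3 * int l - 2 * int q - 1) = 0" using assms(2) by simp
  then show ?thesis unfolding sumset_bound_def Let_def using assms(1) by simp
qed

lemma sb_small_even:
  assumes "even l" "3 * l \<le> 2 * q"
  shows "sumset_bound q l = 3/4"
proof -
  have "max 0 (3 * int l - 2 * int q) = 0" using assms(2) by simp
  then show ?thesis unfolding sumset_bound_def Let_def using assms(1) by simp
qed

lemma sb_big:
  assumes "l > 0" "(odd l \<and> 2 * q + 1 \<le> 3 * l) \<or> (even l \<and> 2 * q < 3 * l)"
  shows "sumset_bound q l = ((real q)^2 - 3 * real l * (real q - real l)) / (real l)^2"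
proof (cases "odd l")
  case True
  then have h: "2 * q + 1 \<le> 3 * l" using assms(2) by auto
  then have m: "max 0 (3 * int l - 2 * int q - 1) = 3 * int l - 2 * int q - 1" by simp
  have "sumset_bound q l = 3/4 + 1 / (4 * (real l)^2)
      + (3 * real l - 2 * real q - 1) * (3 * real l - 2 * real q + 1) / (4 * (real l)^2)"
    unfolding sumset_bound_def Let_def using True m by simp
  also have "\<dots> = ((real q)^2 - 3 * real l * (real q - real l)) / (real l)^2"
    using assms(1) by (simp add: field_simps power2_eq_square)
  finally show ?thesis .
next
  case False
  then have h: "2 * q < 3 * l" using assms(2) by auto
  then have m: "max 0 (3 * int l - 2 * int q) = 3 * int l - 2 * int q" by simp
  have "sumset_bound q l = 3/4 + (3 * real l - 2 * real q)^2 / (4 * (real l)^2)"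
    unfolding sumset_bound_def Let_def using False m by simp
  also have "\<dots> = ((real q)^2 - 3 * real l * (real q - real l)) / (real l)^2"
    using assms(1) by (simp add: field_simps power2_eq_square)
  finally show ?thesis .
qed

lemma upper:
  fixes q l :: nat
  assumes pq: "prime q" and l0: "l > 0" and A: "A \<subseteq> {..<q}" and B: "B \<subseteq> {..<q}" and C: "C \<subseteq> {..<q}"
    and cA: "card A = l" and cB: "card B = l" and cC: "card C = l"
  shows "sum_in_prob q A B C \<le> sumset_bound q l"
proof -
  define N where "N = card {p \<in> A \<times> B. (fst p + snd p) mod q \<in> C}"
  have finA: "finite A" and finB: "finite B" using A B finite_subset by blast+
  have ne: "A \<noteq> {}" "B \<noteq> {}" using cA cB l0 by auto
  have prob: "sum_in_prob q A B C = real N / (real l)^2"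
    unfolding N_def using prob_eq[OF finA ne(1) finB ne(2)] cA cB by (simp add: power2_eq_square)
  have lq: "l \<le> q" using card_mono[OF _ A] cA by simp
  have Nle: "N \<le> l * l" unfolding N_def
    using card_mono[of "A \<times> B" "{p \<in> A \<times> B. (fst p + snd p) mod q \<in> C}"] finA finB cA cB
    by (simp add: card_cartesian_product)
  have cb: "N + t * min q (2 * l - t) \<le> l * l + t * l" if "1 \<le> t" "t \<le> l" for t
    unfolding N_def using count_bound[OF pq A B C cA cB cC that] .
  have lpos: "(real l)^2 > 0" using l0 by simp
  show ?thesis
  proof (cases "l = 1")
    case True
    have "sumset_bound q l = 1" using True sb_small_odd[of l q] lq by simp
    moreover have "real N \<le> 1" using Nle True by simp
    ultimately show ?thesis unfolding prob using True by simp
  next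
    case l1: False
    obtain k where k: "l = 2 * k \<or> l = 2 * k + 1" by (metis oddE evenE)
    have k1: "1 \<le> k" using k l1 l0 by auto
    show ?thesis
    proof (cases "2 * l - k \<le> q")
      case True
      show ?thesis
      proof (cases "l = 2 * k")
        case ev: True
        have "min q (2 * l - k) = 3 * k" using True ev by simp
        then have "N \<le> 3 * k * k" using cb[of k] k1 ev by (simp add: algebra_simps)
        then have "real N \<le> real (3 * k * k)" by (simp only: of_nat_le_iff)
        then have "real N \<le> 3 * real k * real k" by simp
        moreover have "sumset_bound q l = 3/4" using ev True by (intro sb_small_even) auto
        ultimately show ?thesis unfolding prob using ev k1 by (simp add: field_simps power2_eq_square)
      next
        case od: False
        then have od: "l = 2 * k + 1" using k by simp
        have "min q (2 * l - k) = 3 * k + 2" using True od by simp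
        then have "N + k * (3 * k + 2) \<le> l * l + k * l" using cb[of k] k1 od by simp
        moreover have "l * l + k * l = (3 * k * k + 3 * k + 1) + k * (3 * k + 2)" using od by (simp add: algebra_simps)
        ultimately have "N \<le> 3 * k * k + 3 * k + 1" by linarith
        then have "real N \<le> real (3 * k * k + 3 * k + 1)" by (simp only: of_nat_le_iff)
        then have "real N \<le> 3 * real k * real k + 3 * real k + 1" by simp
        moreover have "sumset_bound q l = 3/4 + 1 / (4 * (real l)^2)" using od True by (intro sb_small_odd) auto
        moreover have "3/4 + 1 / (4 * (real l)^2) = (3 * real k * real k + 3 * real k + 1) / (real l)^2"
          using lpos od by (simp add: field_simps power2_eq_square)
        ultimately show ?thesis unfolding prob using lpos by (simp add: divide_right_mono)
      qed
    next
      case False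
      define t where "t = 2 * l - q"
      have t1: "1 \<le> t" "t \<le> l" using False lq unfolding t_def by auto
      have "q \<le> 2 * l" using False by linarith
      then have "2 * l - t = q" unfolding t_def by linarith
      then have "min q (2 * l - t) = q" by simp
      then have "N + t * q \<le> l * l + t * l" using cb[OF t1] by simp
      then have "real (N + t * q) \<le> real (l * l + t * l)" by (simp only: of_nat_le_iff)
      then have "real N + real t * real q \<le> real l * real l + real t * real l" by simp
      moreover have "real t = 2 * real l - real q" unfolding t_def using False by linarith
      ultimately have Nr: "real N \<le> (real q)^2 - 3 * real l * (real q - real l)"
        by (simp add: algebra_simps power2_eq_square)
      have "(odd l \<and> 2 * q + 1 \<le> 3 * l) \<or> (even l \<and> 2 * q < 3 * l)" using k False by auto
      then have "sumset_bound q l = ((real q)^2 - 3 * real l * (real q - real l)) / (real l)^2"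
        using sb_big l0 by blast
      then show ?thesis unfolding prob using Nr lpos by (simp add: divide_right_mono)
    qed
  qed
qed

lemma abs_sum:
  fixes k :: nat
  shows "2 * (\<Sum>a<n. \<bar>int a - int k\<bar>) =
    (if n \<le> k then int n * (2 * int k - int n + 1) else int k * (int k + 1) + (int n - int k) * (int n - int k - 1))"
proof (induction n)
  case 0
  then show ?case by simp
next
  case (Suc n)
  have "2 * (\<Sum>a<Suc n. \<bar>int a - int k\<bar>) = 2 * (\<Sum>a<n. \<bar>int a - int k\<bar>) + 2 * \<bar>int n - int k\<bar>"
    by simp
  also have "\<dots> = (if n \<le> k then int n * (2 * int k - int n + 1) else int k * (int k + 1) + (int n - int k) * (int n - int k - 1))
      + 2 * \<bar>int n - int k\<bar>" using Suc by simp
  also have "\<dots> = (if Suc n \<le> k then int (Suc n) * (2 * int k - int (Suc n) + 1) else int k * (int k + 1) + (int (Suc n) - int k) * (int (Suc n) - int k - 1))"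
  proof (cases "Suc n \<le> k")
    case True
    then have "n \<le> k" "\<bar>int n - int k\<bar> = int k - int n" by auto
    then show ?thesis using True by (simp add: algebra_simps)
  next
    case F: False
    show ?thesis
    proof (cases "n = k")
      case True
      then show ?thesis by (simp add: algebra_simps)
    next
      case False
      then have "\<not> n \<le> k" "\<bar>int n - int k\<bar> = int n - int k" using F by auto
      then show ?thesis using F by (simp add: algebra_simps)
    qed
  qed
  finally show ?case .
qed

lemma row_card:
  fixes a k l :: nat
  assumes "a < l" "k \<le> l"
  shows "int (card {b \<in> {..<l}. k \<le> a + b \<and> a + b < k + l}) = int l - \<bar>int a - int k\<bar>"
proof (cases "a \<le> k")
  case True
  have "{b \<in> {..<l}. k \<le> a + b \<and> a + b < k + l} = {k - a..<l}" using True by auto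
  then show ?thesis using True assms by simp
next
  case False
  have "{b \<in> {..<l}. k \<le> a + b \<and> a + b < k + l} = {..<k + l - a}" using False assms by auto
  then show ?thesis using False assms by simp
qed

lemma small_constr:
  fixes q l :: nat
  assumes l0: "l > 0" and sm: "3 * l \<le> 2 * q + 1"
  defines "k \<equiv> l div 2"
  shows "int (card {p \<in> {..<l} \<times> {..<l}. (fst p + snd p) mod q \<in> {k..<k + l}})
      \<ge> (if even l then 3 * int k * int k else 3 * int k * int k + 3 * int k + 1)"
proof -
  have kl: "l = 2 * k \<or> l = 2 * k + 1" unfolding k_def by auto
  have klq: "k + l \<le> q" using kl sm by auto
  have kle: "k \<le> l" unfolding k_def by simp
  define S where "S = {p \<in> {..<l} \<times> {..<l}. k \<le> fst p + snd p \<and> fst p + snd p < k + l}"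
  have sub: "S \<subseteq> {p \<in> {..<l} \<times> {..<l}. (fst p + snd p) mod q \<in> {k..<k + l}}"
  proof
    fix p assume "p \<in> S"
    then have "k \<le> fst p + snd p" "fst p + snd p < k + l" "p \<in> {..<l} \<times> {..<l}" unfolding S_def by auto
    moreover have "(fst p + snd p) mod q = fst p + snd p" using calculation klq by simp
    ultimately show "p \<in> {p \<in> {..<l} \<times> {..<l}. (fst p + snd p) mod q \<in> {k..<k + l}}" by simp
  qed
  have cmono: "card S \<le> card {p \<in> {..<l} \<times> {..<l}. (fst p + snd p) mod q \<in> {k..<k + l}}"
    by (rule card_mono[OF _ sub]) simp
  have "S = Sigma {..<l} (\<lambda>a. {b \<in> {..<l}. k \<le> a + b \<and> a + b < k + l})"
    unfolding S_def by auto
  then have "card S = (\<Sum>a<l. card {b \<in> {..<l}. k \<le> a + b \<and> a + b < k + l})"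
    by (simp add: card_SigmaI)
  then have "int (card S) = (\<Sum>a<l. int l - \<bar>int a - int k\<bar>)"
    using row_card kle by (simp add: of_nat_sum)
  also have "\<dots> = int l * int l - (\<Sum>a<l. \<bar>int a - int k\<bar>)"
    by (simp add: sum_subtractf)
  finally have cS: "int (card S) = int l * int l - (\<Sum>a<l. \<bar>int a - int k\<bar>)" .

  show ?thesis
  proof (cases "even l")
    case True
    then have l2: "l = 2 * k" using kl by auto
    then have "\<not> l \<le> k" using l0 by simp
    then have "2 * (\<Sum>a<l. \<bar>int a - int k\<bar>) = int k * (int k + 1) + int k * (int k - 1)"
      using abs_sum[of k l] l2 by simp
    then have "(\<Sum>a<l. \<bar>int a - int k\<bar>) = int k * int k" by (simp add: algebra_simps)
    then have "int (card S) = 3 * int k * int k" using cS l2 by (simp add: algebra_simps)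
    then show ?thesis using True cmono by simp
  next
    case False
    then have l2: "l = 2 * k + 1" using kl by auto
    then have "\<not> l \<le> k" by simp
    then have "2 * (\<Sum>a<l. \<bar>int a - int k\<bar>) = int k * (int k + 1) + (int k + 1) * int k"
      using abs_sum[of k l] l2 by simp
    then have "(\<Sum>a<l. \<bar>int a - int k\<bar>) = int k * int k + int k" by (simp add: algebra_simps)
    then have "int (card S) = 3 * int k * int k + 3 * int k + 1" using cS l2 by (simp add: algebra_simps)
    then show ?thesis using False cmono by simp
  qed
qed

lemma not_hit:
  fixes a b i q r :: nat
  assumes "(a + b) mod q = (i + (q - 1)) mod q" "a + b + 1 = i + r" "0 < r" "r < q"
  shows False
proof -
  have q0: "q > 0" using assms by simp
  have "(a + b + 1) mod q = ((a + b) mod q + 1) mod q" by (rule mod_add_left_eq[symmetric])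
  also have "\<dots> = ((i + (q - 1)) mod q + 1) mod q" using assms(1) by simp
  also have "\<dots> = (i + (q - 1) + 1) mod q" by (rule mod_add_left_eq)
  also have "i + (q - 1) + 1 = i + q" using q0 by simp
  also have "(i + q) mod q = (i + 0) mod q" by simp
  finally have "[i + r = i + 0] (mod q)" using assms(2) by (simp add: cong_def)
  then have "[r = 0] (mod q)" using cong_add_lcancel_nat by blast
  then have "q dvd r" by (simp add: cong_0_iff)
  then show False using assms(3,4) nat_dvd_not_less by blast
qed

lemma rr_small:
  fixes q l i c :: nat
  assumes lq: "l \<le> q" and big: "2 * q \<le> 3 * l + 1" and i: "i < q - l" and c: "c = (i + (q - 1)) mod q"
  shows "rr q {..<l} {..<l} c \<le> 2 * l - q"
proof -
  define F where "F = {p \<in> {..<l} \<times> {..<l}. (fst p + snd p) mod q = c}"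
  have "inj_on snd F"
  proof (rule inj_onI)
    fix p p' assume h: "p \<in> F" "p' \<in> F" "snd p = snd p'"
    have "fst p < q" "fst p' < q" using h(1,2) lq unfolding F_def by auto
    moreover have "(fst p + snd p) mod q = (fst p' + snd p) mod q" using h unfolding F_def by auto
    ultimately have "fst p = fst p'" using shift_inj by blast
    then show "p = p'" using h(3) by (simp add: prod_eq_iff)
  qed
  then have "rr q {..<l} {..<l} c = card (snd ` F)" unfolding rr_def F_def by (simp add: card_image)
  also have "\<dots> \<le> card ({..<l} - {i..<i + (q - l)})"
  proof (rule card_mono)
    show "snd ` F \<subseteq> {..<l} - {i..<i + (q - l)}"
    proof
      fix b assume "b \<in> snd ` F"
      then obtain a where ab: "(a, b) \<in> F" by force
      then have abl: "a < l" "b < l" and m: "(a + b) mod q = c" unfolding F_def by auto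
      have "b \<notin> {i..<i + (q - l)}"
      proof
        assume "b \<in> {i..<i + (q - l)}"
        then have "i \<le> b" "b < i + (q - l)" by auto
        then have r: "a + b + 1 - i < q" "0 < a + b + 1 - i" "a + b + 1 = i + (a + b + 1 - i)"
          using abl lq by linarith+
        show False using not_hit[OF _ r(3) r(2) r(1)] m c by simp
      qed
      then show "b \<in> {..<l} - {i..<i + (q - l)}" using abl by auto
    qed
  qed simp
  also have "\<dots> = l - (q - l)"
  proof -
    have "{i..<i + (q - l)} \<subseteq> {..<l}" using i big by auto
    then show ?thesis by (simp add: card_Diff_subset)
  qed
  also have "\<dots> = 2 * l - q" using lq by simp
  finally show ?thesis .
qed

lemma big_constr:
  fixes q l :: nat
  assumes q0: "q > 0" and lq: "l \<le> q" and big: "2 * q \<le> 3 * l + 1"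
  defines "Cc \<equiv> (\<lambda>i. (i + (q - 1)) mod q) ` {..<q - l}"
  defines "T3 \<equiv> {..<q} - Cc"
  shows "T3 \<subseteq> {..<q}" "card T3 = l"
    "int (card {p \<in> {..<l} \<times> {..<l}. (fst p + snd p) mod q \<in> T3})
      \<ge> 3 * int l * int l - 3 * int l * int q + int q * int q"
proof -
  show "T3 \<subseteq> {..<q}" unfolding T3_def by auto
  have Ccq: "Cc \<subseteq> {..<q}" unfolding Cc_def using q0 by auto
  have cCc: "card Cc = q - l" unfolding Cc_def using card_shift[of "{..<q - l}" q "q - 1"] by simp
  have "finite Cc" using Ccq finite_subset by blast
  then show cT: "card T3 = l" unfolding T3_def using Ccq cCc lq by (simp add: card_Diff_subset)
  have Lq: "{..<l} \<subseteq> {..<q}" using lq by auto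
  have un: "{..<q} = T3 \<union> Cc" "T3 \<inter> Cc = {}" using Ccq unfolding T3_def by auto
  have "l * l = (\<Sum>c<q. rr q {..<l} {..<l} c)" using sum_rr[OF Lq Lq q0] by simp
  also have "\<dots> = (\<Sum>c\<in>T3. rr q {..<l} {..<l} c) + (\<Sum>c\<in>Cc. rr q {..<l} {..<l} c)"
    unfolding un(1) using un(2) by (intro sum.union_disjoint) (auto simp: Cc_def T3_def)
  finally have tot: "l * l = card {p \<in> {..<l} \<times> {..<l}. (fst p + snd p) mod q \<in> T3}
       + (\<Sum>c\<in>Cc. rr q {..<l} {..<l} c)"
    using count_sum[OF Lq Lq \<open>T3 \<subseteq> {..<q}\<close>] by simp
  have "(\<Sum>c\<in>Cc. rr q {..<l} {..<l} c) \<le> (\<Sum>c\<in>Cc. 2 * l - q)"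
  proof (rule sum_mono)
    fix c assume "c \<in> Cc"
    then obtain i where "i < q - l" "c = (i + (q - 1)) mod q" unfolding Cc_def by auto
    then show "rr q {..<l} {..<l} c \<le> 2 * l - q" using rr_small lq big by blast
  qed
  also have "\<dots> = (q - l) * (2 * l - q)" using cCc by simp
  finally have "card {p \<in> {..<l} \<times> {..<l}. (fst p + snd p) mod q \<in> T3} + (q - l) * (2 * l - q) \<ge> l * l"
    using tot by linarith
  then have "int (card {p \<in> {..<l} \<times> {..<l}. (fst p + snd p) mod q \<in> T3}) + int ((q - l) * (2 * l - q)) \<ge> int (l * l)"
    by linarith
  moreover have "int ((q - l) * (2 * l - q)) = (int q - int l) * (2 * int l - int q)"
    using lq big by (simp add: of_nat_diff)
  ultimately show "int (card {p \<in> {..<l} \<times> {..<l}. (fst p + snd p) mod q \<in> T3})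
      \<ge> 3 * int l * int l - 3 * int l * int q + int q * int q"
    by (simp add: algebra_simps)
qed

lemma tight:
  fixes q l :: nat
  assumes pq: "prime q" and l0: "0 < l" and lq: "l \<le> q"
  shows "\<exists>T1 T2 T3. T1 \<subseteq> {..<q} \<and> T2 \<subseteq> {..<q} \<and> T3 \<subseteq> {..<q}
          \<and> card T1 = l \<and> card T2 = l \<and> card T3 = l
          \<and> sum_in_prob q T1 T2 T3 = sumset_bound q l"
proof -
  have q0: "q > 0" using prime_gt_0_nat[OF pq] .
  have Lq: "{..<l} \<subseteq> {..<q}" using lq by auto
  have lpos: "(real l)^2 > 0" using l0 by simp
  have prob: "sum_in_prob q {..<l} {..<l} T3 = real (card {p \<in> {..<l} \<times> {..<l}. (fst p + snd p) mod q \<in> T3}) / (real l)^2" for T3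
  proof -
    have "{..<l} \<noteq> {}" using l0 by auto
    then show ?thesis using prob_eq[of "{..<l}" "{..<l}" q T3] by (simp add: power2_eq_square)
  qed
  show ?thesis
  proof (cases "3 * l \<le> 2 * q + 1")
    case True
    define k where "k = l div 2"
    have kl: "l = 2 * k \<or> l = 2 * k + 1" unfolding k_def by auto
    have klq: "k + l \<le> q" using kl True by linarith
    define T3 where "T3 = {k..<k + l}"
    have T3q: "T3 \<subseteq> {..<q}" unfolding T3_def using klq by auto
    have cT3: "card T3 = l" unfolding T3_def by simp
    define N where "N = card {p \<in> {..<l} \<times> {..<l}. (fst p + snd p) mod q \<in> T3}"
    have low: "int N \<ge> (if even l then 3 * int k * int k else 3 * int k * int k + 3 * int k + 1)"
      unfolding N_def T3_def k_def using small_constr[OF l0 True] by simp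
    have up: "sum_in_prob q {..<l} {..<l} T3 \<le> sumset_bound q l"
      using upper[OF pq l0 Lq Lq T3q] cT3 by simp
    have "sumset_bound q l \<le> sum_in_prob q {..<l} {..<l} T3"
    proof (cases "even l")
      case ev: True
      then have l2: "l = 2 * k" using kl by auto
      have "3 * int k * int k \<le> int N" using low ev by simp
      then have "real_of_int (3 * int k * int k) \<le> real_of_int (int N)" by (simp only: of_int_le_iff)
      then have "3 * real k * real k \<le> real N" by simp
      moreover have "3 * l \<le> 2 * q" using l2 True by presburger
      then have "sumset_bound q l = 3/4" using ev by (intro sb_small_even)
      moreover have "3/4 = (3 * real k * real k) / (real l)^2"
        using l2 lpos l0 by (simp add: field_simps power2_eq_square)
      ultimately show ?thesis unfolding prob N_def[symmetric] using lpos
        by (simp add: divide_right_mono)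
    next
      case od: False
      then have l2: "l = 2 * k + 1" using kl by auto
      have "3 * int k * int k + 3 * int k + 1 \<le> int N" using low od by simp
      then have "real_of_int (3 * int k * int k + 3 * int k + 1) \<le> real_of_int (int N)" by (simp only: of_int_le_iff)
      then have "3 * real k * real k + 3 * real k + 1 \<le> real N" by simp
      moreover have "sumset_bound q l = 3/4 + 1 / (4 * (real l)^2)" using od True by (intro sb_small_odd)
      moreover have "3/4 + 1 / (4 * (real l)^2) = (3 * real k * real k + 3 * real k + 1) / (real l)^2"
        using l2 lpos by (simp add: field_simps power2_eq_square)
      ultimately show ?thesis unfolding prob N_def[symmetric] using lpos
        by (simp add: divide_right_mono)
    qed
    then have "sum_in_prob q {..<l} {..<l} T3 = sumset_bound q l" using up by linarith
    then show ?thesis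
      apply -
      apply (rule exI[of _ "{..<l}"], rule exI[of _ "{..<l}"], rule exI[of _ T3])
      using Lq T3q cT3 by simp
  next
    case False
    then have big: "2 * q \<le> 3 * l + 1" by simp
    define T3 where "T3 = {..<q} - (\<lambda>i. (i + (q - 1)) mod q) ` {..<q - l}"
    have bc: "T3 \<subseteq> {..<q}" "card T3 = l"
      "int (card {p \<in> {..<l} \<times> {..<l}. (fst p + snd p) mod q \<in> T3})
        \<ge> 3 * int l * int l - 3 * int l * int q + int q * int q"
      unfolding T3_def
      by (rule big_constr(1)[OF q0 lq big], rule big_constr(2)[OF q0 lq big], rule big_constr(3)[OF q0 lq big])
    define N where "N = card {p \<in> {..<l} \<times> {..<l}. (fst p + snd p) mod q \<in> T3}"
    have up: "sum_in_prob q {..<l} {..<l} T3 \<le> sumset_bound q l"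
      using upper[OF pq l0 Lq Lq bc(1)] bc(2) by simp
    have "real_of_int (3 * int l * int l - 3 * int l * int q + int q * int q) \<le> real_of_int (int N)"
      using bc(3) unfolding N_def by (simp only: of_int_le_iff)
    then have Nr: "(real q)^2 - 3 * real l * (real q - real l) \<le> real N"
      by (simp add: algebra_simps power2_eq_square)
    have "2 * q + 1 \<le> 3 * l" "2 * q < 3 * l" using False by linarith+
    then have "(odd l \<and> 2 * q + 1 \<le> 3 * l) \<or> (even l \<and> 2 * q < 3 * l)" by blast
    then have "sumset_bound q l = ((real q)^2 - 3 * real l * (real q - real l)) / (real l)^2"
      by (rule sb_big[OF l0])
    then have "sumset_bound q l \<le> sum_in_prob q {..<l} {..<l} T3"
      unfolding prob N_def[symmetric] using Nr lpos by (simp add: divide_right_mono)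
    then have "sum_in_prob q {..<l} {..<l} T3 = sumset_bound q l" using up by linarith
    then show ?thesis
      apply -
      apply (rule exI[of _ "{..<l}"], rule exI[of _ "{..<l}"], rule exI[of _ T3])
      using Lq bc(1,2) by simp
  qed
qed

theorem lemma3p2:
  fixes q :: nat
  assumes "prime q" and "q \<ge> 3"
  shows
    "(\<forall>l T1 T2 T3. l > 0 \<and> T1 \<subseteq> {..<q} \<and> T2 \<subseteq> {..<q} \<and> T3 \<subseteq> {..<q}
        \<and> card T1 = l \<and> card T2 = l \<and> card T3 = l
        \<longrightarrow> sum_in_prob q T1 T2 T3 \<le> sumset_bound q l)
   \<and> (\<forall>l. 0 < l \<and> l \<le> q \<longrightarrow>
        (\<exists>T1 T2 T3. T1 \<subseteq> {..<q} \<and> T2 \<subseteq> {..<q} \<and> T3 \<subseteq> {..<q}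
          \<and> card T1 = l \<and> card T2 = l \<and> card T3 = l
          \<and> sum_in_prob q T1 T2 T3 = sumset_bound q l))
   \<and> (\<forall>l T1 T2 T3. l > 0 \<and> T1 \<subseteq> {..<q} \<and> T2 \<subseteq> {..<q} \<and> T3 \<subseteq> {..<q}
        \<and> card T1 = l \<and> card T2 = l \<and> card T3 = l \<and> 3 * real l \<le> 2 * real q
        \<longrightarrow> sum_in_prob q T1 T2 T3 \<le>
              (if odd l then 3/4 + 1 / (4 * (real l)^2) else 3/4))
   \<and> (\<forall>l T1 T2 T3. l > 0 \<and> T1 \<subseteq> {..<q} \<and> T2 \<subseteq> {..<q} \<and> T3 \<subseteq> {..<q}
        \<and> card T1 = l \<and> card T2 = l \<and> card T3 = l
        \<and> 2 * real q < 3 * real l \<and> l \<le> q - 1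
        \<longrightarrow> sum_in_prob q T1 T2 T3 \<le>
              ((real q)^2 - 3 * real l * (real q - real l)) / (real l)^2)"
proof -
  have P1: "sum_in_prob q T1 T2 T3 \<le> sumset_bound q l"
    if "l > 0 \<and> T1 \<subseteq> {..<q} \<and> T2 \<subseteq> {..<q} \<and> T3 \<subseteq> {..<q}
        \<and> card T1 = l \<and> card T2 = l \<and> card T3 = l" for l T1 T2 T3
    using upper[OF assms(1), of l T1 T2 T3] that by blast
  have P3: "sum_in_prob q T1 T2 T3 \<le> (if odd l then 3/4 + 1 / (4 * (real l)^2) else 3/4)"
    if h: "l > 0 \<and> T1 \<subseteq> {..<q} \<and> T2 \<subseteq> {..<q} \<and> T3 \<subseteq> {..<q}
        \<and> card T1 = l \<and> card T2 = l \<and> card T3 = l \<and> 3 * real l \<le> 2 * real q" for l T1 T2 T3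
  proof -
    have pre: "l > 0 \<and> T1 \<subseteq> {..<q} \<and> T2 \<subseteq> {..<q} \<and> T3 \<subseteq> {..<q}
        \<and> card T1 = l \<and> card T2 = l \<and> card T3 = l" using h by blast
    have le: "sum_in_prob q T1 T2 T3 \<le> sumset_bound q l" by (rule P1[OF pre])
    have "3 * real l \<le> 2 * real q" using h by blast
    then have "3 * l \<le> 2 * q" by linarith
    then have "sumset_bound q l = (if odd l then 3/4 + 1 / (4 * (real l)^2) else 3/4)"
    proof (cases "odd l")
      case True then show ?thesis using sb_small_odd[of l q] \<open>3 * l \<le> 2 * q\<close> by simp
    next
      case False then show ?thesis using sb_small_even[of l q] \<open>3 * l \<le> 2 * q\<close> by simp
    qed
    then show ?thesis using le by simp
  qed
  have P4: "sum_in_prob q T1 T2 T3 \<le> ((real q)^2 - 3 * real l * (real q - real l)) / (real l)^2"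
    if h: "l > 0 \<and> T1 \<subseteq> {..<q} \<and> T2 \<subseteq> {..<q} \<and> T3 \<subseteq> {..<q}
        \<and> card T1 = l \<and> card T2 = l \<and> card T3 = l \<and> 2 * real q < 3 * real l \<and> l \<le> q - 1" for l T1 T2 T3
  proof -
    have pre: "l > 0 \<and> T1 \<subseteq> {..<q} \<and> T2 \<subseteq> {..<q} \<and> T3 \<subseteq> {..<q}
        \<and> card T1 = l \<and> card T2 = l \<and> card T3 = l" using h by blast
    have le: "sum_in_prob q T1 T2 T3 \<le> sumset_bound q l" by (rule P1[OF pre])
    have "2 * real q < 3 * real l" "l > 0" using h by blast+
    then have "2 * q < 3 * l" by linarith
    then have "(odd l \<and> 2 * q + 1 \<le> 3 * l) \<or> (even l \<and> 2 * q < 3 * l)" by linarith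
    then have "sumset_bound q l = ((real q)^2 - 3 * real l * (real q - real l)) / (real l)^2"
      using sb_big \<open>l > 0\<close> by blast
    then show ?thesis using le by simp
  qed
  have P2: "\<exists>T1 T2 T3. T1 \<subseteq> {..<q} \<and> T2 \<subseteq> {..<q} \<and> T3 \<subseteq> {..<q}
          \<and> card T1 = l \<and> card T2 = l \<and> card T3 = l
          \<and> sum_in_prob q T1 T2 T3 = sumset_bound q l" if "0 < l \<and> l \<le> q" for l
    using tight[OF assms(1)] that by blast
  show ?thesis
    apply (intro conjI allI impI)
    subgoal by (rule P1)
    subgoal by (rule P2)
    subgoal by (rule P3)
    subgoal by (rule P4)
    done
qed

end
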